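(* Let $\Phi$ be a dictionary with coherence $\mu$ and Babel function $\mu_1$, let $m\ge1$ with $m<\tfrac12(\mu^{-1}+1)$, let $y=\Phi x^*$ be an $m$-sparse signal, and let $\beta>0$. Then every iterate $x_k$ of the Frank-Wolfe algorithm for Problem (P$_\beta$) satisfies $$\|x_k\|_1\le 2\|y\|_2\sqrt{\frac{m}{1-\mu_1(m-1)}}.$$
   Context: A dictionary is a matrix $\Phi=[\varphi_1,\dots,\varphi_n]\in\mathbb{R}^{d\times n}$ whose columns (atoms) satisfy $\|\varphi_i\|_2=1$. Its coherence is $\mu=\max_{j\neq k}|\langle\varphi_j,\varphi_k\rangle|$, and its Babel function is $\mu_1(p)=\max_{|\Lambda|=p}\max_{i\notin\Lambda}\sum_{j\in\Lambda}|\langle\varphi_i,\varphi_j\rangle|$ for $p\ge1$, with $\mu_1(0)=0$. A signal $y\in\mathbb{R}^d$ is $m$-sparse if $y=\Phi x^*$ for some $x^*\in\mathbb{R}^n$ with at most $m$ nonzero entries. Problem (P$_\beta$): minimize $f(x)=\tfrac12\|y-\Phi x\|_2^2$ over $B_1(\beta)=\{x\in\mathbb{R}^n:\|x\|_1\le\beta\}$. Frank-Wolfe algorithm for (P$_\beta$): set $x_0=0$. For $k=0,1,2,\dots$: let $r_k=y-\Phi x_k$; choose $i_k\in\arg\max_{i}|\langle\varphi_i,r_k\rangle|$ (any maximizer); set $s_k=\operatorname{sign}(\langle\varphi_{i_k},r_k\rangle)\,\beta\, e_{i_k}$ ($e_i$ the canonical basis vectors, $\operatorname{sign}(0)\in\{\pm1\}$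 arbitrary); choose $\gamma_k\in\arg\min_{\gamma\in[0,1]}\|y-\Phi(x_k+\gamma(s_k-x_k))\|_2^2$; set $x_{k+1}=x_k+\gamma_k(s_k-x_k)$. *)

theory Defs
  imports "HOL-Analysis.Analysis"
begin

definition dict_apply :: "('n::finite \<Rightarrow> real^'d) \<Rightarrow> ('n \<Rightarrow> real) \<Rightarrow> real^'d" where
  "dict_apply Phi x = (\<Sum>i\<in>UNIV. x i *\<^sub>R Phi i)"

definition l1norm :: "('n::finite \<Rightarrow> real) \<Rightarrow> real" where
  "l1norm x = (\<Sum>i\<in>UNIV. \<bar>x i\<bar>)"

text \<open>Coherence: maximum of absolute inner products of distinct atoms
  (convention: 0 if there is only one atom).\<close>
definition coherence :: "('n::finite \<Rightarrow> real^'d) \<Rightarrow> real" where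
  "coherence Phi = Max ({\<bar>Phi j \<bullet> Phi k\<bar> | j k. j \<noteq> k} \<union> {0})"

definition babel :: "('n::finite \<Rightarrow> real^'d) \<Rightarrow> nat \<Rightarrow> real" where
  "babel Phi p = (if p = 0 then 0 else
     Max {(\<Sum>j\<in>L. \<bar>Phi i \<bullet> Phi j\<bar>) | L i. card L = p \<and> i \<notin> L})"

text \<open>One Frank-Wolfe step for minimising 1/2 ||y - Phi x||^2 over the l1-ball of radius beta,
  with arbitrary choice of the maximiser, of the sign when the inner product is 0,
  and of the exact line-search minimiser.\<close>
definition fw_step :: "('n::finite \<Rightarrow> real^'d) \<Rightarrow> real^'d \<Rightarrow> real \<Rightarrow> ('n \<Rightarrow> real) \<Rightarrow> ('n \<Rightarrow> real) \<Rightarrow> bool" where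
  "fw_step Phi y beta xk xk' \<longleftrightarrow>
     (let r = y - dict_apply Phi xk in
      \<exists>i \<sigma> \<gamma>.
        (\<forall>j. \<bar>Phi j \<bullet> r\<bar> \<le> \<bar>Phi i \<bullet> r\<bar>) \<and>
        \<sigma> \<in> {-1, 1} \<and> (Phi i \<bullet> r \<noteq> 0 \<longrightarrow> \<sigma> = sgn (Phi i \<bullet> r)) \<and>
        (let s = (\<lambda>j. if j = i then \<sigma> * beta else 0) in
          \<gamma> \<in> {0..1} \<and>
          (\<forall>g\<in>{0..1}. (norm (y - dict_apply Phi (\<lambda>j. xk j + \<gamma> * (s j - xk j))))\<^sup>2
                       \<le> (norm (y - dict_apply Phi (\<lambda>j. xk j + g * (s j - xk j))))\<^sup>2) \<and>
          xk' = (\<lambda>j. xk j + \<gamma> * (s j - xk j))))"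

definition fw_iterates :: "('n::finite \<Rightarrow> real^'d) \<Rightarrow> real^'d \<Rightarrow> real \<Rightarrow> (nat \<Rightarrow> 'n \<Rightarrow> real) \<Rightarrow> bool" where
  "fw_iterates Phi y beta xs \<longleftrightarrow>
     xs 0 = (\<lambda>_. 0) \<and> (\<forall>k. fw_step Phi y beta (xs k) (xs (Suc k)))"

end

theory Submission imports Defs begin

lemma inner_dict: "Phi j \<bullet> dict_apply Phi d = (\<Sum>l\<in>UNIV. d l * (Phi j \<bullet> Phi l))"
  by (simp add: dict_apply_def inner_sum_right)

lemma dict_diff: "dict_apply Phi (\<lambda>l. a l - b l) = dict_apply Phi a - dict_apply Phi b"
  by (simp add: dict_apply_def scaleR_diff_left sum_subtractf)

lemma dict_zero: "dict_apply Phi (\<lambda>l. 0) = 0"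
  by (simp add: dict_apply_def)

lemma coh_ge: "j \<noteq> k \<Longrightarrow> \<bar>Phi j \<bullet> Phi k\<bar> \<le> coherence (Phi::'n::finite \<Rightarrow> real^'d)"
proof -
  assume "j \<noteq> k"
  have fin: "finite ({\<bar>Phi j \<bullet> Phi k\<bar> | j k. j \<noteq> k} \<union> {0})"
  proof -
    have "{\<bar>Phi j \<bullet> Phi k\<bar> | j k. j \<noteq> k} \<subseteq> (\<lambda>(j,k). \<bar>Phi j \<bullet> Phi k\<bar>) ` UNIV" by auto
    then show ?thesis using finite_subset[OF _ finite_imageI[OF finite]] by blast
  qed
  show ?thesis unfolding coherence_def by (rule Max_ge[OF fin]) (use \<open>j \<noteq> k\<close> in auto)
qed

lemma coh_nonneg: "0 \<le> coherence (Phi::'n::finite \<Rightarrow> real^'d)"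
proof -
  have fin: "finite ({\<bar>Phi j \<bullet> Phi k\<bar> | j k. j \<noteq> k} \<union> {0})"
  proof -
    have "{\<bar>Phi j \<bullet> Phi k\<bar> | j k. j \<noteq> k} \<subseteq> (\<lambda>(j,k). \<bar>Phi j \<bullet> Phi k\<bar>) ` UNIV" by auto
    then show ?thesis using finite_subset[OF _ finite_imageI[OF finite]] by blast
  qed
  show ?thesis unfolding coherence_def by (rule Max_ge[OF fin]) auto
qed

lemma babel_ge:
  fixes Phi :: "'n::finite \<Rightarrow> real^'d"
  assumes "card L = p" "i \<notin> L" "p > 0"
  shows "(\<Sum>j\<in>L. \<bar>Phi i \<bullet> Phi j\<bar>) \<le> babel Phi p"
proof -
  have "{(\<Sum>j\<in>L. \<bar>Phi i \<bullet> Phi j\<bar>) | L i. card L = p \<and> i \<notin> L} \<subseteq> (\<lambda>(L,i). (\<Sum>j\<in>L. \<bar>Phi i \<bullet> Phi j\<bar>)) ` UNIV" by auto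
  then have fin: "finite {(\<Sum>j\<in>L. \<bar>Phi i \<bullet> Phi j\<bar>) | L i. card L = p \<and> i \<notin> L}" by (rule finite_subset) (intro finite_imageI finite)
  have "(\<Sum>j\<in>L. \<bar>Phi i \<bullet> Phi j\<bar>) \<in> {(\<Sum>j\<in>L. \<bar>Phi i \<bullet> Phi j\<bar>) | L i. card L = p \<and> i \<notin> L}"
    using assms by blast
  then show ?thesis unfolding babel_def using assms Max_ge[OF fin] by auto
qed

lemma babel_le:
  fixes Phi :: "'n::finite \<Rightarrow> real^'d"
  assumes "p < CARD('n)"
  shows "babel Phi p \<le> real p * coherence Phi"
proof (cases "p = 0")
  case True then show ?thesis by (simp add: babel_def)
next
  case False
  have "{(\<Sum>j\<in>L. \<bar>Phi i \<bullet> Phi j\<bar>) | L i. card L = p \<and> i \<notin> L} \<subseteq> (\<lambda>(L,i). (\<Sum>j\<in>L. \<bar>Phi i \<bullet> Phi j\<bar>)) ` UNIV" by auto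
  then have fin: "finite {(\<Sum>j\<in>L. \<bar>Phi i \<bullet> Phi j\<bar>) | L i. card L = p \<and> i \<notin> L}" by (rule finite_subset) (intro finite_imageI finite)
  obtain i0 :: 'n where True by auto
  have "p \<le> card (UNIV - {i0})" using assms by (simp add: card_Diff_singleton)
  then obtain L0 where "L0 \<subseteq> UNIV - {i0}" "card L0 = p" by (meson obtain_subset_with_card_n)
  then have ne: "{(\<Sum>j\<in>L. \<bar>Phi i \<bullet> Phi j\<bar>) | L i. card L = p \<and> i \<notin> L} \<noteq> {}" by blast
  have "Max {(\<Sum>j\<in>L. \<bar>Phi i \<bullet> Phi j\<bar>) | L i. card L = p \<and> i \<notin> L} \<le> real p * coherence Phi"
  proof (rule Max.boundedI[OF fin ne])
    fix a assume "a \<in> {(\<Sum>j\<in>L. \<bar>Phi i \<bullet> Phi j\<bar>) | L i. card L = p \<and> i \<notin> L}"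
    then obtain L i where a: "a = (\<Sum>j\<in>L. \<bar>Phi i \<bullet> Phi j\<bar>)" "card L = p" "i \<notin> L" by blast
    have "a \<le> (\<Sum>j\<in>L. coherence Phi)" unfolding a(1)
      by (rule sum_mono) (use coh_ge a(3) in metis)
    then show "a \<le> real p * coherence Phi" using a(2) by simp
  qed
  then show ?thesis using False by (simp add: babel_def)
qed

lemma inner_dict_supp:
  assumes supp: "\<forall>l. l \<notin> T \<longrightarrow> d l = 0"
  shows "Phi j \<bullet> dict_apply Phi d = (\<Sum>l\<in>T. d l * (Phi j \<bullet> Phi l))"
proof -
  have "(\<Sum>l\<in>UNIV. d l * (Phi j \<bullet> Phi l)) = (\<Sum>l\<in>T. d l * (Phi j \<bullet> Phi l))"
    by (rule sum.mono_neutral_right) (use supp in auto)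
  then show ?thesis by (simp add: inner_dict)
qed

lemma diag_lb:
  fixes Phi :: "'n::finite \<Rightarrow> real^'d"
  assumes unit: "\<forall>i. norm (Phi i) = 1" and supp: "\<forall>l. l \<notin> T \<longrightarrow> d l = 0"
    and j0: "j0 \<in> T" and mx: "\<forall>l. \<bar>d l\<bar> \<le> \<bar>d j0\<bar>"
  shows "\<bar>d j0\<bar> * (1 - (real (card T) - 1) * coherence Phi) \<le> \<bar>Phi j0 \<bullet> dict_apply Phi d\<bar>"
proof -
  define R where "R = (\<Sum>l\<in>T-{j0}. d l * (Phi j0 \<bullet> Phi l))"
  have fin: "finite T" by simp
  have one: "Phi j0 \<bullet> Phi j0 = 1" using unit by (metis power2_norm_eq_inner power_one)
  have E: "Phi j0 \<bullet> dict_apply Phi d = d j0 + R"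
    unfolding R_def inner_dict_supp[OF supp] sum.remove[OF fin j0] one by simp
  have B: "\<bar>R\<bar> \<le> (\<Sum>l\<in>T-{j0}. \<bar>d j0\<bar> * coherence Phi)"
  proof -
    have "\<bar>R\<bar> \<le> (\<Sum>l\<in>T-{j0}. \<bar>d l * (Phi j0 \<bullet> Phi l)\<bar>)"
      unfolding R_def by (rule sum_abs)
    also have "\<dots> \<le> (\<Sum>l\<in>T-{j0}. \<bar>d j0\<bar> * coherence Phi)"
    proof (rule sum_mono)
      fix l assume "l \<in> T - {j0}"
      then have "j0 \<noteq> l" by auto
      then have h: "\<bar>Phi j0 \<bullet> Phi l\<bar> \<le> coherence Phi" by (rule coh_ge)
      show "\<bar>d l * (Phi j0 \<bullet> Phi l)\<bar> \<le> \<bar>d j0\<bar> * coherence Phi"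
        unfolding abs_mult by (rule mult_mono[OF mx[rule_format] h]) simp_all
    qed
    finally show ?thesis .
  qed
  have "0 < card T" using j0 fin by (intro card_gt_0_iff[THEN iffD2]) auto
  then have c1: "card T \<ge> 1" by simp
  have C: "(\<Sum>l\<in>T-{j0}. \<bar>d j0\<bar> * coherence Phi) = (real (card T) - 1) * (\<bar>d j0\<bar> * coherence Phi)"
    using c1 j0 by (simp add: card_Diff_singleton of_nat_diff)
  have D: "\<bar>d j0\<bar> * (1 - (real (card T) - 1) * coherence Phi) = \<bar>d j0\<bar> - (real (card T) - 1) * (\<bar>d j0\<bar> * coherence Phi)"
    by (simp add: right_diff_distrib)
  have F: "\<bar>d j0\<bar> - \<bar>R\<bar> \<le> \<bar>d j0 + R\<bar>" by arith
  show ?thesis unfolding E D using B C F by linarith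
qed

lemma off_ub:
  fixes Phi :: "'n::finite \<Rightarrow> real^'d"
  assumes supp: "\<forall>l. l \<notin> T \<longrightarrow> d l = 0"
    and i: "i \<notin> T" and mx: "\<forall>l. \<bar>d l\<bar> \<le> M"
  shows "\<bar>Phi i \<bullet> dict_apply Phi d\<bar> \<le> real (card T) * (M * coherence Phi)"
proof -
  have "\<bar>Phi i \<bullet> dict_apply Phi d\<bar> \<le> (\<Sum>l\<in>T. \<bar>d l * (Phi i \<bullet> Phi l)\<bar>)"
    unfolding inner_dict_supp[OF supp] by (rule sum_abs)
  also have "\<dots> \<le> (\<Sum>l\<in>T. M * coherence Phi)"
  proof (rule sum_mono)
    fix l assume "l \<in> T"
    then have "i \<noteq> l" using i by auto
    then have h: "\<bar>Phi i \<bullet> Phi l\<bar> \<le> coherence Phi" by (rule coh_ge)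
    have "0 \<le> M" using mx[rule_format, of i] abs_ge_zero[of "d i"] by linarith
    then show "\<bar>d l * (Phi i \<bullet> Phi l)\<bar> \<le> M * coherence Phi"
      unfolding abs_mult by (rule mult_mono[OF mx[rule_format] h]) simp_all
  qed
  finally show ?thesis by simp
qed

lemma gersh:
  fixes Phi :: "'n::finite \<Rightarrow> real^'d"
  assumes unit: "\<forall>i. norm (Phi i) = 1" and supp: "\<forall>l. l \<notin> S \<longrightarrow> x l = 0"
    and bnd: "\<forall>i\<in>S. (\<Sum>j\<in>S-{i}. \<bar>Phi i \<bullet> Phi j\<bar>) \<le> b"
  shows "(1 - b) * (\<Sum>i\<in>S. (x i)\<^sup>2) \<le> (norm (dict_apply Phi x))\<^sup>2"
proof -
  define G where "G i j = Phi i \<bullet> Phi j" for i j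
  define A where "A i j = (if i = j then 0 else \<bar>G i j\<bar>)" for i j
  have fin: "finite S" by simp
  have Gsym: "G i j = G j i" for i j unfolding G_def by (rule inner_commute)
  have Asym: "A i j = A j i" for i j unfolding A_def using Gsym[of i j] by auto
  have G1: "G i i = 1" for i unfolding G_def using unit by (metis power2_norm_eq_inner power_one)
  have v: "dict_apply Phi x = (\<Sum>i\<in>S. x i *\<^sub>R Phi i)"
    unfolding dict_apply_def by (rule sum.mono_neutral_right) (use supp in auto)
  have n2: "(norm (dict_apply Phi x))\<^sup>2 = (\<Sum>i\<in>S. \<Sum>j\<in>S. x i * x j * G i j)"
  proof -
    have "(norm (dict_apply Phi x))\<^sup>2 = dict_apply Phi x \<bullet> dict_apply Phi x" by (rule power2_norm_eq_inner)
    also have "\<dots> = (\<Sum>i\<in>S. x i * (Phi i \<bullet> dict_apply Phi x))"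
      by (subst (1) v) (simp add: inner_sum_left)
    also have "\<dots> = (\<Sum>i\<in>S. \<Sum>j\<in>S. x i * x j * G i j)"
      unfolding inner_dict_supp[OF supp] G_def by (simp add: sum_distrib_left mult.assoc)
    finally show ?thesis .
  qed
  have pw: "x i * x j * G i j \<ge> (if i = j then (x i)\<^sup>2 else 0) - A i j * ((x i)\<^sup>2 + (x j)\<^sup>2) / 2" for i j
  proof (cases "i = j")
    case True
    have "A i j = 0" using True by (simp add: A_def)
    moreover have "G i j = 1" using True G1 by simp
    ultimately show ?thesis using True by (simp add: power2_eq_square)
  next
    case False
    have h: "0 \<le> (\<bar>x i\<bar> - \<bar>x j\<bar>)\<^sup>2" by simp
    have "\<bar>x i * x j\<bar> \<le> ((x i)\<^sup>2 + (x j)\<^sup>2) / 2"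
      using h unfolding power2_diff power2_abs abs_mult by simp
    then have "\<bar>G i j\<bar> * \<bar>x i * x j\<bar> \<le> \<bar>G i j\<bar> * (((x i)\<^sup>2 + (x j)\<^sup>2) / 2)"
      by (rule mult_left_mono) simp
    moreover have "- (\<bar>G i j\<bar> * \<bar>x i * x j\<bar>) \<le> x i * x j * G i j"
      by (metis abs_ge_minus_self abs_mult minus_le_iff mult.commute)
    moreover have "A i j * ((x i)\<^sup>2 + (x j)\<^sup>2) / 2 = \<bar>G i j\<bar> * (((x i)\<^sup>2 + (x j)\<^sup>2) / 2)"
      using False by (simp add: A_def)
    moreover have "(if i = j then (x i)\<^sup>2 else 0) = 0" using False by simp
    ultimately show ?thesis by linarith
  qed
  have L1: "(\<Sum>i\<in>S. \<Sum>j\<in>S. x i * x j * G i j) \<ge>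
        (\<Sum>i\<in>S. \<Sum>j\<in>S. (if i = j then (x i)\<^sup>2 else 0) - A i j * ((x i)\<^sup>2 + (x j)\<^sup>2) / 2)"
    by (intro sum_mono pw)
  have L2: "(\<Sum>i\<in>S. \<Sum>j\<in>S. (if i = j then (x i)\<^sup>2 else 0) - A i j * ((x i)\<^sup>2 + (x j)\<^sup>2) / 2)
     = (\<Sum>i\<in>S. (x i)\<^sup>2) - (\<Sum>i\<in>S. \<Sum>j\<in>S. A i j * (x i)\<^sup>2) / 2 - (\<Sum>i\<in>S. \<Sum>j\<in>S. A i j * (x j)\<^sup>2) / 2"
  proof -
    have "(\<Sum>j\<in>S. (if i = j then (x i)\<^sup>2 else 0) - A i j * ((x i)\<^sup>2 + (x j)\<^sup>2) / 2)
       = (x i)\<^sup>2 - (\<Sum>j\<in>S. A i j * (x i)\<^sup>2) / 2 - (\<Sum>j\<in>S. A i j * (x j)\<^sup>2) / 2" if i: "i \<in> S" for i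
    proof -
      have "(\<Sum>j\<in>S. (if i = j then (x i)\<^sup>2 else 0)) = (x i)\<^sup>2" using i fin by simp
      moreover have "(\<Sum>j\<in>S. A i j * ((x i)\<^sup>2 + (x j)\<^sup>2) / 2)
          = (\<Sum>j\<in>S. A i j * (x i)\<^sup>2) / 2 + (\<Sum>j\<in>S. A i j * (x j)\<^sup>2) / 2"
        by (simp add: add_divide_distrib distrib_left sum.distrib sum_divide_distrib)
      ultimately show ?thesis by (simp add: sum_subtractf)
    qed
    then have "(\<Sum>i\<in>S. \<Sum>j\<in>S. (if i = j then (x i)\<^sup>2 else 0) - A i j * ((x i)\<^sup>2 + (x j)\<^sup>2) / 2)
      = (\<Sum>i\<in>S. (x i)\<^sup>2 - (\<Sum>j\<in>S. A i j * (x i)\<^sup>2) / 2 - (\<Sum>j\<in>S. A i j * (x j)\<^sup>2) / 2)"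
      by (rule sum.cong[OF refl])
    then show ?thesis by (simp add: sum_subtractf sum_divide_distrib[symmetric])
  qed
  have L3: "(\<Sum>i\<in>S. \<Sum>j\<in>S. A i j * (x j)\<^sup>2) = (\<Sum>i\<in>S. \<Sum>j\<in>S. A i j * (x i)\<^sup>2)"
    by (subst sum.swap) (simp add: Asym)
  have L4: "(\<Sum>i\<in>S. \<Sum>j\<in>S. A i j * (x i)\<^sup>2) \<le> (\<Sum>i\<in>S. b * (x i)\<^sup>2)"
  proof (rule sum_mono)
    fix i assume i: "i \<in> S"
    have "(\<Sum>j\<in>S. A i j) = (\<Sum>j\<in>S-{i}. \<bar>Phi i \<bullet> Phi j\<bar>)"
    proof -
      have "(\<Sum>j\<in>S-{i}. A i j) = (\<Sum>j\<in>S-{i}. \<bar>Phi i \<bullet> Phi j\<bar>)"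
      proof (rule sum.cong[OF refl])
        fix j assume "j \<in> S - {i}"
        then have "i \<noteq> j" by auto
        then show "A i j = \<bar>Phi i \<bullet> Phi j\<bar>" unfolding A_def G_def by simp
      qed
      moreover have "A i i = 0" unfolding A_def by simp
      ultimately show ?thesis unfolding sum.remove[OF fin i] by simp
    qed
    then have "(\<Sum>j\<in>S. A i j) \<le> b" using bnd i by simp
    then show "(\<Sum>j\<in>S. A i j * (x i)\<^sup>2) \<le> b * (x i)\<^sup>2"
      by (simp add: sum_distrib_right[symmetric] mult_right_mono)
  qed
  have "(\<Sum>i\<in>S. (x i)\<^sup>2) - (\<Sum>i\<in>S. b * (x i)\<^sup>2) \<le> (\<Sum>i\<in>S. \<Sum>j\<in>S. x i * x j * G i j)"
    using L1 L2 L3 L4 by linarith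
  then show ?thesis unfolding n2 by (simp add: sum_distrib_left[symmetric] algebra_simps)
qed


lemma babel_sub:
  fixes Phi :: "'n::finite \<Rightarrow> real^'d"
  assumes cS: "card S \<le> m" and mC: "m \<le> CARD('n)" and i: "i \<in> S"
  shows "(\<Sum>j\<in>S-{i}. \<bar>Phi i \<bullet> Phi j\<bar>) \<le> babel Phi (m - 1)"
proof -
  have fin: "finite S" by simp
  define R where "R = S - {i}"
  have cR: "card R = card S - 1" unfolding R_def using i fin by (simp add: card_Diff_singleton)
  show ?thesis
  proof (cases "m - 1 = 0")
    case True
    then have "card R = 0" using cR cS by simp
    then have "R = {}" using fin R_def by simp
    then have "S - {i} = {}" using R_def by simp
    then show ?thesis using True unfolding \<open>S - {i} = {}\<close> by (simp add: babel_def)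
  next
    case False
    define U where "U = (UNIV - {i}) - R"
    have "card (UNIV - {i}) = CARD('n) - 1" by (simp add: card_Diff_singleton)
    moreover have "R \<subseteq> UNIV - {i}" unfolding R_def by auto
    ultimately have cU: "card U = CARD('n) - 1 - card R" unfolding U_def
      by (simp add: card_Diff_subset)
    have "m - 1 - card R \<le> card U" using cU mC by simp
    then obtain C where C: "C \<subseteq> U" "card C = m - 1 - card R" by (meson obtain_subset_with_card_n)
    define L where "L = R \<union> C"
    have disj: "R \<inter> C = {}" using C(1) unfolding U_def by auto
    have cL: "card L = m - 1"
    proof -
      have "card R \<le> m - 1" using cR cS by simp
      moreover have "card L = card R + card C" unfolding L_def by (rule card_Un_disjoint[OF _ _ disj]) auto
      ultimately show ?thesis using C(2) by simp
    qed
    have iL: "i \<notin> L" unfolding L_def R_def using C(1) U_def by auto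
    have "(\<Sum>j\<in>R. \<bar>Phi i \<bullet> Phi j\<bar>) \<le> (\<Sum>j\<in>L. \<bar>Phi i \<bullet> Phi j\<bar>)"
      by (rule sum_mono2) (auto simp: L_def)
    also have "\<dots> \<le> babel Phi (m - 1)" using babel_ge[OF cL iL] False by simp
    finally show ?thesis unfolding R_def .
  qed
qed

lemma supp_max:
  fixes d :: "'n::finite \<Rightarrow> real"
  assumes supp: "\<forall>l. l \<notin> T \<longrightarrow> d l = 0" and nz: "d l0 \<noteq> 0"
  shows "\<exists>j0\<in>T. d j0 \<noteq> 0 \<and> (\<forall>l. \<bar>d l\<bar> \<le> \<bar>d j0\<bar>)"
proof -
  have fin: "finite T" by simp
  have l0: "l0 \<in> T" using supp nz by auto
  have "Max ((\<lambda>l. \<bar>d l\<bar>) ` T) \<in> (\<lambda>l. \<bar>d l\<bar>) ` T" using l0 by (intro Max_in) auto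
  then obtain j0 where j0: "j0 \<in> T" "\<bar>d j0\<bar> = Max ((\<lambda>l. \<bar>d l\<bar>) ` T)" by auto
  have ge: "\<bar>d l\<bar> \<le> \<bar>d j0\<bar>" for l
  proof (cases "l \<in> T")
    case True then show ?thesis using j0 by simp
  next
    case False then show ?thesis using supp by simp
  qed
  have "d j0 \<noteq> 0" using nz ge[of l0] by auto
  then show ?thesis using j0 ge by blast
qed

lemma step:
  fixes Phi :: "'n::finite \<Rightarrow> real^'d"
  assumes unit: "\<forall>i. norm (Phi i) = 1"
    and m_pos: "m \<ge> 1"
    and m_coh: "coherence Phi * (2 * real m - 1) < 1"
    and y_def: "y = dict_apply Phi xstar"
    and cS: "card S \<le> m"
    and suppx: "\<forall>l. l \<notin> S \<longrightarrow> xstar l = 0"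
    and beta_pos: "beta > 0"
    and suppk: "\<forall>l. l \<notin> S \<longrightarrow> xk l = 0"
    and st: "fw_step Phi y beta xk xk'"
  shows "(\<forall>l. l \<notin> S \<longrightarrow> xk' l = 0) \<and>
         (norm (y - dict_apply Phi xk'))\<^sup>2 \<le> (norm (y - dict_apply Phi xk))\<^sup>2"
proof -
  define r where "r = y - dict_apply Phi xk"
  define \<mu> where "\<mu> = coherence Phi"
  have mu0: "\<mu> \<ge> 0" unfolding \<mu>_def by (rule coh_nonneg)
  have ex: "\<exists>i \<sigma> \<gamma>. (\<forall>j. \<bar>Phi j \<bullet> r\<bar> \<le> \<bar>Phi i \<bullet> r\<bar>) \<and>
        \<sigma> \<in> {-1, 1} \<and> (Phi i \<bullet> r \<noteq> 0 \<longrightarrow> \<sigma> = sgn (Phi i \<bullet> r)) \<and>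
        (\<gamma> \<in> {0..1} \<and>
          (\<forall>g\<in>{0..1}. (norm (y - dict_apply Phi (\<lambda>j. xk j + \<gamma> * ((if j = i then \<sigma> * beta else 0) - xk j))))\<^sup>2
                       \<le> (norm (y - dict_apply Phi (\<lambda>j. xk j + g * ((if j = i then \<sigma> * beta else 0) - xk j))))\<^sup>2) \<and>
          xk' = (\<lambda>j. xk j + \<gamma> * ((if j = i then \<sigma> * beta else 0) - xk j)))"
    using st unfolding fw_step_def Let_def r_def .
  then obtain i \<sigma> \<gamma> where H: "(\<forall>j. \<bar>Phi j \<bullet> r\<bar> \<le> \<bar>Phi i \<bullet> r\<bar>) \<and>
        \<sigma> \<in> {-1, 1} \<and> (Phi i \<bullet> r \<noteq> 0 \<longrightarrow> \<sigma> = sgn (Phi i \<bullet> r)) \<and>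
        (\<gamma> \<in> {0..1} \<and>
          (\<forall>g\<in>{0..1}. (norm (y - dict_apply Phi (\<lambda>j. xk j + \<gamma> * ((if j = i then \<sigma> * beta else 0) - xk j))))\<^sup>2
                       \<le> (norm (y - dict_apply Phi (\<lambda>j. xk j + g * ((if j = i then \<sigma> * beta else 0) - xk j))))\<^sup>2) \<and>
          xk' = (\<lambda>j. xk j + \<gamma> * ((if j = i then \<sigma> * beta else 0) - xk j)))"
    by (elim exE) (rule that, assumption)
  from H have am: "\<forall>j. \<bar>Phi j \<bullet> r\<bar> \<le> \<bar>Phi i \<bullet> r\<bar>" by (elim conjE)
  from H have sig: "\<sigma> \<in> {-1, 1}" by (elim conjE)
  from H have ls: "\<forall>g\<in>{0..1}. (norm (y - dict_apply Phi (\<lambda>j. xk j + \<gamma> * ((if j = i then \<sigma> * beta else 0) - xk j))))\<^sup>2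
                       \<le> (norm (y - dict_apply Phi (\<lambda>j. xk j + g * ((if j = i then \<sigma> * beta else 0) - xk j))))\<^sup>2" by (elim conjE)
  from H have xk': "xk' = (\<lambda>j. xk j + \<gamma> * ((if j = i then \<sigma> * beta else 0) - xk j))" by (elim conjE)
  have dec: "(norm (y - dict_apply Phi xk'))\<^sup>2 \<le> (norm (y - dict_apply Phi xk))\<^sup>2"
    using ls[rule_format, of 0] unfolding xk' by simp
  have supp': "\<forall>l. l \<notin> S \<longrightarrow> xk' l = 0"
  proof (cases "i \<in> S")
    case True
    then show ?thesis unfolding xk' using suppk by auto
  next
    case False
    define c where "c l = xstar l - xk l" for l
    have suppc: "\<forall>l. l \<notin> S \<longrightarrow> c l = 0" unfolding c_def using suppx suppk by simp
    have rc: "r = dict_apply Phi c" unfolding r_def c_def y_def by (simp add: dict_diff)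
    have c0: "\<forall>l. c l = 0"
    proof (rule ccontr)
      assume "\<not> (\<forall>l. c l = 0)"
      then obtain l0 where "c l0 \<noteq> 0" by blast
      from supp_max[OF suppc this] obtain j0 where j0: "j0 \<in> S" "c j0 \<noteq> 0" "\<forall>l. \<bar>c l\<bar> \<le> \<bar>c j0\<bar>" by blast
      have lb: "\<bar>c j0\<bar> * (1 - (real (card S) - 1) * \<mu>) \<le> \<bar>Phi j0 \<bullet> r\<bar>"
        unfolding rc \<mu>_def by (rule diag_lb[OF unit suppc j0(1) j0(3)])
      have ub: "\<bar>Phi i \<bullet> r\<bar> \<le> real (card S) * (\<bar>c j0\<bar> * \<mu>)"
        unfolding rc \<mu>_def by (rule off_ub[OF suppc False j0(3)])
      have "\<bar>c j0\<bar> * (1 - (real (card S) - 1) * \<mu>) \<le> \<bar>c j0\<bar> * (real (card S) * \<mu>)"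
      proof -
        have "\<bar>c j0\<bar> * (1 - (real (card S) - 1) * \<mu>) \<le> real (card S) * (\<bar>c j0\<bar> * \<mu>)"
          using lb ub am[rule_format, of j0] by linarith
        then show ?thesis by (simp add: algebra_simps)
      qed
      then have "1 - (real (card S) - 1) * \<mu> \<le> real (card S) * \<mu>"
        using j0(2) by (simp add: mult_le_cancel_left)
      then have "1 \<le> (2 * real (card S) - 1) * \<mu>" by (simp add: algebra_simps)
      also have "\<dots> \<le> (2 * real m - 1) * \<mu>" using cS mu0 by (intro mult_right_mono) auto
      finally show False using m_coh \<mu>_def by (simp add: mult.commute)
    qed
    have "c = (\<lambda>l. 0)" using c0 by (intro ext) simp
    then have r0: "r = 0" unfolding rc by (simp add: dict_zero)
    then have yk: "dict_apply Phi xk = y" unfolding r_def by simp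
    have "(norm (y - dict_apply Phi xk'))\<^sup>2 \<le> 0" using dec yk by simp
    then have yk': "dict_apply Phi xk' = y" by simp
    define e where "e l = xk' l - xk l" for l
    have e0: "dict_apply Phi e = 0" unfolding e_def dict_diff yk yk' by simp
    have suppe: "\<forall>l. l \<notin> insert i S \<longrightarrow> e l = 0" unfolding e_def xk' using suppk by auto
    have "\<gamma> = 0"
    proof (rule ccontr)
      assume g: "\<gamma> \<noteq> 0"
      have "e i = \<gamma> * (\<sigma> * beta)" unfolding e_def xk' using suppk False by simp
      then have "e i \<noteq> 0" using g sig beta_pos by auto
      from supp_max[OF suppe this] obtain j0 where j0: "j0 \<in> insert i S" "e j0 \<noteq> 0" "\<forall>l. \<bar>e l\<bar> \<le> \<bar>e j0\<bar>" by blast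
      have lb: "\<bar>e j0\<bar> * (1 - (real (card (insert i S)) - 1) * \<mu>) \<le> \<bar>Phi j0 \<bullet> dict_apply Phi e\<bar>"
        unfolding \<mu>_def by (rule diag_lb[OF unit suppe j0(1) j0(3)])
      have cT: "card (insert i S) = card S + 1" using False by simp
      have "(real (card (insert i S)) - 1) * \<mu> \<le> real m * \<mu>" using cT cS mu0 by (intro mult_right_mono) auto
      also have "\<dots> \<le> (2 * real m - 1) * \<mu>" using m_pos mu0 by (intro mult_right_mono) auto
      also have "\<dots> < 1" using m_coh \<mu>_def by (simp add: mult.commute)
      finally have "0 < \<bar>e j0\<bar> * (1 - (real (card (insert i S)) - 1) * \<mu>)" using j0(2) by simp
      then show False using lb e0 by simp
    qed
    then show ?thesis unfolding xk' using suppk by simp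
  qed
  show ?thesis using supp' dec by blast
qed


theorem lemma2:
  fixes Phi :: "'n::finite \<Rightarrow> real^'d"
    and xstar :: "'n \<Rightarrow> real"
    and y :: "real^'d"
    and beta :: real
    and m :: nat
    and xs :: "nat \<Rightarrow> 'n \<Rightarrow> real"
  assumes unit: "\<forall>i. norm (Phi i) = 1"
    and m_pos: "m \<ge> 1"
    and m_le: "m \<le> CARD('n)"
    and m_coh: "coherence Phi * (2 * real m - 1) < 1"
    and y_def: "y = dict_apply Phi xstar"
    and sparse: "card {i. xstar i \<noteq> 0} \<le> m"
    and beta_pos: "beta > 0"
    and fw: "fw_iterates Phi y beta xs"
  shows "\<forall>k. l1norm (xs k) \<le> 2 * norm y * sqrt (real m / (1 - babel Phi (m - 1)))"
proof
  fix k
  define S where "S = {i. xstar i \<noteq> 0}"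
  have suppx: "\<forall>l. l \<notin> S \<longrightarrow> xstar l = 0" by (simp add: S_def)
  have cS: "card S \<le> m" using sparse by (simp add: S_def)
  have fw0: "xs 0 = (\<lambda>_. 0)" using fw unfolding fw_iterates_def by (elim conjE)
  have fwS: "\<And>k. fw_step Phi y beta (xs k) (xs (Suc k))"
    using fw unfolding fw_iterates_def by (elim conjE) (erule spec)
  have inv: "(\<forall>l. l \<notin> S \<longrightarrow> xs k l = 0) \<and> norm (y - dict_apply Phi (xs k)) \<le> norm y" for k
  proof (induction k)
    case 0
    show ?case unfolding fw0 dict_zero by simp
  next
    case (Suc k)
    have st: "(\<forall>l. l \<notin> S \<longrightarrow> xs (Suc k) l = 0) \<and>
         (norm (y - dict_apply Phi (xs (Suc k))))\<^sup>2 \<le> (norm (y - dict_apply Phi (xs k)))\<^sup>2"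
    proof (rule step[OF unit m_pos m_coh y_def cS suppx beta_pos _ fwS])
      show "\<forall>l. l \<notin> S \<longrightarrow> xs k l = 0" using Suc.IH by (elim conjE)
    qed
    have "norm (y - dict_apply Phi (xs (Suc k))) \<le> norm (y - dict_apply Phi (xs k))"
      by (rule power2_le_imp_le[OF st[THEN conjunct2]]) simp
    also have "\<dots> \<le> norm y" using Suc.IH by (rule conjunct2)
    finally show ?case using st[THEN conjunct1] by (intro conjI)
  qed
  define x where "x = xs k"
  define b where "b = babel Phi (m - 1)"
  define \<mu> where "\<mu> = coherence Phi"
  have mu0: "\<mu> \<ge> 0" unfolding \<mu>_def by (rule coh_nonneg)
  have suppk: "\<forall>l. l \<notin> S \<longrightarrow> x l = 0" using inv unfolding x_def by blast
  have resk: "norm (y - dict_apply Phi x) \<le> norm y" using inv unfolding x_def by blast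
  have "b \<le> real (m - 1) * \<mu>" unfolding b_def \<mu>_def using m_le m_pos by (intro babel_le) linarith
  also have "\<dots> \<le> (2 * real m - 1) * \<mu>" using m_pos mu0 by (intro mult_right_mono) auto
  also have "\<dots> < 1" using m_coh \<mu>_def by (simp add: mult.commute)
  finally have b1: "0 < 1 - b" by simp
  have bnd: "\<forall>i\<in>S. (\<Sum>j\<in>S-{i}. \<bar>Phi i \<bullet> Phi j\<bar>) \<le> b"
    unfolding b_def using babel_sub[OF cS m_le] by blast
  have G: "(1 - b) * (\<Sum>i\<in>S. (x i)\<^sup>2) \<le> (norm (dict_apply Phi x))\<^sup>2"
    by (rule gersh[OF unit suppk bnd])
  have l1: "l1norm x = (\<Sum>i\<in>S. \<bar>x i\<bar>)"
    unfolding l1norm_def by (rule sum.mono_neutral_right) (use suppk in auto)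
  have CS: "(l1norm x)\<^sup>2 \<le> (\<Sum>i\<in>S. (x i)\<^sup>2) * real m"
  proof -
    have "(l1norm x)\<^sup>2 \<le> (\<Sum>i\<in>S. \<bar>x i\<bar>\<^sup>2) * real (card S)"
      unfolding l1 by (rule sum_squared_le_sum_of_squares)
    also have "\<dots> \<le> (\<Sum>i\<in>S. (x i)\<^sup>2) * real m"
      unfolding power2_abs using cS by (intro mult_left_mono) (auto intro: sum_nonneg)
    finally show ?thesis .
  qed
  have nPhi: "norm (dict_apply Phi x) \<le> 2 * norm y"
  proof -
    have "norm (dict_apply Phi x) \<le> norm y + norm (y - dict_apply Phi x)"
      by (metis add_diff_cancel_left' diff_add_cancel norm_triangle_ineq4 add.commute)
    then show ?thesis using resk by linarith
  qed
  have "(\<Sum>i\<in>S. (x i)\<^sup>2) \<le> (norm (dict_apply Phi x))\<^sup>2 / (1 - b)"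
    using G b1 by (simp add: pos_le_divide_eq mult.commute)
  also have "\<dots> \<le> (2 * norm y)\<^sup>2 / (1 - b)"
    using nPhi b1 by (intro divide_right_mono power_mono) auto
  finally have "(\<Sum>i\<in>S. (x i)\<^sup>2) * real m \<le> (2 * norm y)\<^sup>2 / (1 - b) * real m"
    by (rule mult_right_mono) simp
  with CS have "(l1norm x)\<^sup>2 \<le> (2 * norm y)\<^sup>2 * (real m / (1 - b))" by simp
  then have "l1norm x \<le> sqrt ((2 * norm y)\<^sup>2 * (real m / (1 - b)))" by (rule real_le_rsqrt)
  also have "\<dots> = 2 * norm y * sqrt (real m / (1 - b))" unfolding real_sqrt_mult real_sqrt_abs by simp
  finally show "l1norm (xs k) \<le> 2 * norm y * sqrt (real m / (1 - babel Phi (m - 1)))"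
    unfolding x_def b_def .
qed

end
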